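(* Let $n\in\mathbb{N}$ and let $X_a,X_b,X_c\subset X$ be the subspaces defined below. Then every function in $X_a\oplus X_b$ is even with respect to $x=1/2$ if $n$ is even and odd with respect to $x=1/2$ if $n$ is odd; every function in $X_c$ is odd with respect to $x=1/2$ if $n$ is even and even with respect to $x=1/2$ if $n$ is odd.
   Context: Let $X=\{u\in H^2(0,1): u'(0)=u'(1)=0,\ \int_0^1u\,dx=0\}$. For $u\in X$ its extension $\tilde u:\mathbb{R}\to\mathbb{R}$ is the $2$-periodic function with $\tilde u(x)=u(x)$ for $0\le x\le 1$ and $\tilde u(x)=u(2-x)$ for $1<x<2$; it lies in $H^2_{per}(\mathbb{R})=\{v\in H^2_{loc}(\mathbb{R}): v(x+2)=v(x)\ \forall x,\ \int_0^2v\,dx=0\}$. On $W=H^2_{per}(\mathbb{R})$ define $(T_nv)(x)=-v(x+1/n)$ and $W_a=N(T_n-I)$, $W_b=N(T_n^{n-1}+\dots+T_n+I)$, $W_c=N(T_n^n+I)$. Define $X_\tau=\{u\in X:\tilde u\in W_\tau\}$ for $\tau\in\{a,b,c\}$; one has $X=X_a\oplus X_b\oplus X_c$. *)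

theory Defs
  imports "HOL-Analysis.Analysis"
begin

text \<open>H^2 on a compact interval [a,b], via the continuous (C^1) representative:
  u is differentiable on [a,b] with derivative u', and u' is absolutely continuous
  with second derivative g in L^2(a,b), i.e. u'(x) = u'(a) + int_a^x g.\<close>
definition H2_with :: "real \<Rightarrow> real \<Rightarrow> (real \<Rightarrow> real) \<Rightarrow> (real \<Rightarrow> real) \<Rightarrow> bool" where
  "H2_with a b u u' \<longleftrightarrow>
     (\<forall>x\<in>{a..b}. (u has_real_derivative u' x) (at x within {a..b})) \<and>
     (\<exists>g. set_integrable lborel {a..b} g \<and>
          set_integrable lborel {a..b} (\<lambda>t. (g t)\<^sup>2) \<and>
          (\<forall>x\<in>{a..b}. u' x = u' a + (LINT t:{a..x}|lborel. g t)))"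

definition H2_on :: "real \<Rightarrow> real \<Rightarrow> (real \<Rightarrow> real) \<Rightarrow> bool" where
  "H2_on a b u \<longleftrightarrow> (\<exists>u'. H2_with a b u u')"

definition Xspace :: "(real \<Rightarrow> real) set" where
  "Xspace = {u. \<exists>u'. H2_with 0 1 u u' \<and> u' 0 = 0 \<and> u' 1 = 0 \<and> integral {0..1} u = 0}"

text \<open>The even 2-periodic extension.\<close>
definition ext :: "(real \<Rightarrow> real) \<Rightarrow> real \<Rightarrow> real" where
  "ext u x = (let y = x - 2 * of_int \<lfloor>x / 2\<rfloor> in if y \<le> 1 then u y else u (2 - y))"

definition Wspace :: "(real \<Rightarrow> real) set" where
  "Wspace = {v. (\<forall>a b. a < b \<longrightarrow> H2_on a b v) \<and> (\<forall>x. v (x + 2) = v x) \<and> integral {0..2} v = 0}"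

definition Tn :: "nat \<Rightarrow> (real \<Rightarrow> real) \<Rightarrow> (real \<Rightarrow> real)" where
  "Tn n v = (\<lambda>x. - v (x + 1 / real n))"

definition Wa :: "nat \<Rightarrow> (real \<Rightarrow> real) set" where
  "Wa n = {v \<in> Wspace. Tn n v = v}"

definition Wb :: "nat \<Rightarrow> (real \<Rightarrow> real) set" where
  "Wb n = {v \<in> Wspace. (\<lambda>x. \<Sum>k<n. ((Tn n ^^ k) v) x) = (\<lambda>x. 0)}"

definition Wc :: "nat \<Rightarrow> (real \<Rightarrow> real) set" where
  "Wc n = {v \<in> Wspace. (Tn n ^^ n) v = (\<lambda>x. - v x)}"

definition Xa :: "nat \<Rightarrow> (real \<Rightarrow> real) set" where
  "Xa n = {u \<in> Xspace. ext u \<in> Wa n}"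
definition Xb :: "nat \<Rightarrow> (real \<Rightarrow> real) set" where
  "Xb n = {u \<in> Xspace. ext u \<in> Wb n}"
definition Xc :: "nat \<Rightarrow> (real \<Rightarrow> real) set" where
  "Xc n = {u \<in> Xspace. ext u \<in> Wc n}"

definition fsum :: "(real \<Rightarrow> real) set \<Rightarrow> (real \<Rightarrow> real) set \<Rightarrow> (real \<Rightarrow> real) set" where
  "fsum A B = {(\<lambda>x. f x + g x) | f g. f \<in> A \<and> g \<in> B}"

definition even_half :: "(real \<Rightarrow> real) \<Rightarrow> bool" where
  "even_half u \<longleftrightarrow> (\<forall>x\<in>{0..1}. u (1 - x) = u x)"
definition odd_half :: "(real \<Rightarrow> real) \<Rightarrow> bool" where
  "odd_half u \<longleftrightarrow> (\<forall>x\<in>{0..1}. u (1 - x) = - u x)"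

end

theory Submission
  imports Defs
begin

lemma ext_in: "x \<in> {0..1} \<Longrightarrow> ext u x = u x"
proof -
  assume "x \<in> {0..1}"
  then have "\<lfloor>x/2\<rfloor> = 0" by (simp add: floor_eq_iff)
  then show ?thesis using \<open>x \<in> {0..1}\<close> by (simp add: ext_def)
qed

lemma ext_m1: "x \<in> {0..1} \<Longrightarrow> ext u (x - 1) = u (1 - x)"
proof -
  assume x: "x \<in> {0..1}"
  show ?thesis
  proof (cases "x = 1")
    case True then show ?thesis by (simp add: ext_def)
  next
    case False
    then have "\<lfloor>(x - 1)/2\<rfloor> = -1" using x by (simp add: floor_eq_iff)
    then show ?thesis using x by (auto simp: ext_def Let_def)
  qed
qed

lemma Tpow: "((Tn n ^^ k) v) x = (-1)^k * v (x + real k / real n)"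
proof (induction k arbitrary: x)
  case 0 then show ?case by simp
next
  case (Suc k)
  have "((Tn n ^^ Suc k) v) x = - ((Tn n ^^ k) v) (x + 1 / real n)"
    by (simp add: Tn_def)
  also have "\<dots> = (-1)^Suc k * v (x + real (Suc k) / real n)"
    using Suc by (simp add: add_divide_distrib algebra_simps)
  finally show ?case .
qed

lemma Tpow_n: "n \<ge> 1 \<Longrightarrow> ((Tn n ^^ n) v) (x - 1) = (-1)^n * v x"
  using Tpow[of n n v "x - 1"] by simp

lemma Tfix: "Tn n v = v \<Longrightarrow> (Tn n ^^ k) v = v"
  by (induction k) auto

lemma Tsum_zero:
  assumes "(\<lambda>x. \<Sum>k<n. ((Tn n ^^ k) v) x) = (\<lambda>x. 0)"
  shows "(Tn n ^^ n) v = v"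
proof
  fix x
  have a: "(\<Sum>k<n. ((Tn n ^^ k) v) y) = 0" for y using assms by meson
  have "(\<Sum>k<n. ((Tn n ^^ Suc k) v) x) = - (\<Sum>k<n. ((Tn n ^^ k) v) (x + 1 / real n))"
    by (simp add: Tn_def sum_negf)
  also have "\<dots> = 0" using a by simp
  finally have b: "(\<Sum>k<n. ((Tn n ^^ Suc k) v) x) = 0" .
  have "(\<Sum>k<n. ((Tn n ^^ Suc k) v) x) - (\<Sum>k<n. ((Tn n ^^ k) v) x)
        = ((Tn n ^^ n) v) x - v x"
    using sum_lessThan_telescope[of "\<lambda>k. ((Tn n ^^ k) v) x" n]
    by (simp add: sum_subtractf)
  then show "((Tn n ^^ n) v) x = v x" using a[of x] b by simp
qed

lemma per_n: "(Tn n ^^ n) v = v \<Longrightarrow> n \<ge> 1 \<Longrightarrow> x \<in> {0..1} \<Longrightarrow> v = ext u \<Longrightarrow>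
  u (1 - x) = (-1)^n * u x"
  using Tpow_n[of n v x] ext_m1[of x u] ext_in[of x u] by simp

lemma XaP: "n \<ge> 1 \<Longrightarrow> f \<in> Xa n \<Longrightarrow> x \<in> {0..1} \<Longrightarrow> f (1 - x) = (-1)^n * f x"
  unfolding Xa_def Wa_def using per_n[of n "ext f" x f] Tfix[of n "ext f" n] by auto

lemma XbP: "n \<ge> 1 \<Longrightarrow> f \<in> Xb n \<Longrightarrow> x \<in> {0..1} \<Longrightarrow> f (1 - x) = (-1)^n * f x"
  unfolding Xb_def Wb_def using per_n[of n "ext f" x f] Tsum_zero[of n "ext f"] by auto

lemma XcP: "n \<ge> 1 \<Longrightarrow> f \<in> Xc n \<Longrightarrow> x \<in> {0..1} \<Longrightarrow> f (1 - x) = - ((-1)^n * f x)"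
proof -
  assume n: "n \<ge> 1" and f: "f \<in> Xc n" and x: "x \<in> {0..1}"
  from f have c: "(Tn n ^^ n) (ext f) = (\<lambda>x. - ext f x)" by (simp add: Xc_def Wc_def)
  have "((Tn n ^^ n) (ext f)) (x - 1) = (-1)^n * ext f x" using Tpow_n n by blast
  then show ?thesis using c ext_m1[OF x] ext_in[OF x] by simp
qed

theorem lemma2p8:
  fixes n :: nat
  assumes "n \<ge> 1"
  shows "(\<forall>u \<in> fsum (Xa n) (Xb n). if even n then even_half u else odd_half u) \<and>
         (\<forall>u \<in> Xc n. if even n then odd_half u else even_half u)"
proof
  show "\<forall>u \<in> fsum (Xa n) (Xb n). if even n then even_half u else odd_half u"
  proof
    fix u assume "u \<in> fsum (Xa n) (Xb n)"
    then obtain f g where u: "u = (\<lambda>x. f x + g x)" and f: "f \<in> Xa n" and g: "g \<in> Xb n"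
      by (auto simp: fsum_def)
    have "u (1 - x) = (-1)^n * u x" if "x \<in> {0..1}" for x
      using XaP[OF assms f that] XbP[OF assms g that] u by (simp add: algebra_simps)
    then show "if even n then even_half u else odd_half u"
      by (auto simp: even_half_def odd_half_def)
  qed
next
  show "\<forall>u \<in> Xc n. if even n then odd_half u else even_half u"
    using XcP[OF assms] by (auto simp: even_half_def odd_half_def)
qed

end
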